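(* Consider the multi-machine power system described in the context, and fix $\omega_0>0$ and $i_r^*\in\mathbb{R}^n_{>0}$, with zero-dynamics manifold $\Omega=\{x\in\mathcal{X}: i_r=i_r^*,\ \omega=\omega_0\mathbb{1}\}$. The unique control action $u=u^\star(x)=(u_m^\star(x),u_r^\star(x))$ which renders $\Omega$ invariant for the system is given by $$u_r^\star(x)=R_r i_r^*+(L_m\otimes \mathsf{e}_1^\top)\mathbf{R}_\theta^\top L_s^{-1}(-Z_s i_s+v),\qquad u_m^\star(x)=D\omega_0\mathbb{1}-I_r^*(L_m\otimes\mathsf{e}_2^\top)\mathbf{R}_\theta^\top i_s,$$ where $Z_s=R_s+\boldsymbol{j}\omega_0 L_s$ and $I_r^*=\mathrm{diag}(i_{r_i}^* )$.
   Context: Notation: $j=\begin{bsmallmatrix}0&-1\\1&0\end{bsmallmatrix}$, $I_2$ the $2\times2$ identity, $\mathsf{e}_1=(1,0)^\top$, $\mathsf{e}_2=(0,1)^\top$, $\mathbb{1}\in\mathbb{R}^n$ the all-ones vector, $\otimes$ the Kronecker product, $\boldsymbol{j}=I\otimes j$ (identity of the dimension dictated by context). For $\theta=(\theta_1,\dots,\theta_n)\in\mathbb{T}^n$, $R_{\theta_i}=\begin{bsmallmatrix}\cos\theta_i&-\sin\theta_i\\ \sin\theta_i&\cos\theta_i\end{bsmallmatrix}$ and $\mathbf{R}_\theta=\mathrm{blkdiag}(R_{\theta_1},\dots,R_{\theta_n})$. System: $n$ synchronous machines and $m$ transmission lines on a connected undirected graph with signed incidence matrix $E\in\mathbb{R}^{n\times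 m}$; $\mathbf{E}=E\otimes I_2$. Parameters (all scalar entries positive): $M=\mathrm{diag}(M_i)$, $D=\mathrm{diag}(D_i)$, $R_r=\mathrm{diag}(R_{r_i})$, $L_r=\mathrm{diag}(L_{r_i})$, $L_m=\mathrm{diag}(L_{m_i})$ in $\mathbb{R}^{n\times n}$; $R_s=\mathrm{diag}(R_{s_i})\otimes I_2$, $L_s=\mathrm{diag}(L_{s_i})\otimes I_2$, $C=\mathrm{diag}(C_i)\otimes I_2$, $G=\mathrm{diag}(G_i)\otimes I_2$ in $\mathbb{R}^{2n\times 2n}$; $L_{\mathsf t}=\mathrm{diag}(L_{\mathsf t_k})\otimes I_2$, $R_{\mathsf t}=\mathrm{diag}(R_{\mathsf t_k})\otimes I_2$ in $\mathbb{R}^{2m\times2m}$; and $L_{s_i}L_{r_i}-L_{m_i}^2>0$. State $x=(M\omega,\theta,\lambda_r,\lambda_s,Cv,L_{\mathsf t}i_{\mathsf t})\in\mathcal{X}=\mathbb{R}^n\times\mathbb{T}^n\times\mathbb{R}^n\times\mathbb{R}^{2n}\times\mathbb{R}^{2n}\times\mathbb{R}^{2m}$, input $u=(u_m,u_r)\in\mathbb{R}^n\times\mathbb{R}^n$. Stator currents $i_s\in\mathbb{R}^{2n}$ and rotor currents $i_r\in\mathbb{R}^n$ are defined from the fluxes by $\lambda_s=L_s i_s+\mathbf{R}_\theta(L_m\otimes\mathsf{e}_1)i_r$, $\lambda_r=L_r i_r+(L_m\otimes\mathsf{e}_1^\top)\mathbf{R}_\theta^\top i_s$; electrical torque $\tau_e=-I_r(L_m\otimes\mathsf{e}_2^\top)\mathbf{R}_\theta^\top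 i_s$ with $I_r=\mathrm{diag}(i_{r_i})$. Dynamics: $M\dot\omega=-D\omega-\tau_e+u_m$, $\dot\theta=\omega$, $\dot\lambda_r=-R_r i_r+u_r$, $\dot\lambda_s=-R_s i_s+v$, $C\dot v=-Gv-\mathbf{E}i_{\mathsf t}-i_s$, $L_{\mathsf t}\tfrac{d}{dt}i_{\mathsf t}=-R_{\mathsf t}i_{\mathsf t}+\mathbf{E}^\top v$. *)

theory Defs
  imports "HOL-Analysis.Analysis"
begin

text \<open>Machines are indexed by a finite type 'n, transmission lines by a finite type 'm.
  Per-machine 2-vectors (dq/alpha-beta quantities) are elements of real^2.
  Block-diagonal matrices (the Kronecker products with I_2 or e_1, e_2) are written
  out machine by machine.\<close>

record ('n::finite, 'm::finite) params =
  pM  :: "real^'n"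
  pD  :: "real^'n"
  pRr :: "real^'n"
  pLr :: "real^'n"
  pLm :: "real^'n"
  pRs :: "real^'n"
  pLs :: "real^'n"
  pC  :: "real^'n"
  pG  :: "real^'n"
  pLt :: "real^'m"
  pRt :: "real^'m"
  pE  :: "real^'m^'n"

definition rot :: "real \<Rightarrow> real^2^2" where
  "rot th = vector [vector [cos th, - sin th], vector [sin th, cos th]]"

definition jmat :: "real^2^2" where
  "jmat = vector [vector [0, -1], vector [1, 0]]"

definition e1 :: "real^2" where "e1 = vector [1, 0]"

definition incidence_matrix :: "real^'m^'n \<Rightarrow> bool" where
  "incidence_matrix E \<longleftrightarrow>
     (\<forall>k. \<exists>a b. a \<noteq> b \<and> E $ a $ k = 1 \<and> E $ b $ k = -1 \<and>
            (\<forall>i. i \<noteq> a \<and> i \<noteq> b \<longrightarrow> E $ i $ k = 0))"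

definition graph_adj :: "real^'m^'n \<Rightarrow> ('n \<times> 'n) set" where
  "graph_adj E = {(a, b). a \<noteq> b \<and> (\<exists>k. E $ a $ k \<noteq> 0 \<and> E $ b $ k \<noteq> 0)}"

definition connected_graph :: "real^'m^'n \<Rightarrow> bool" where
  "connected_graph E \<longleftrightarrow> (\<forall>a b. (a, b) \<in> (graph_adj E)\<^sup>*)"

definition valid_params :: "('n::finite, 'm::finite) params \<Rightarrow> bool" where
  "valid_params p \<longleftrightarrow>
     (\<forall>i. pM p $ i > 0 \<and> pD p $ i > 0 \<and> pRr p $ i > 0 \<and> pLr p $ i > 0 \<and> pLm p $ i > 0 \<and>
          pRs p $ i > 0 \<and> pLs p $ i > 0 \<and> pC p $ i > 0 \<and> pG p $ i > 0 \<and>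
          pLs p $ i * pLr p $ i - (pLm p $ i)\<^sup>2 > 0) \<and>
     (\<forall>k. pLt p $ k > 0 \<and> pRt p $ k > 0) \<and>
     incidence_matrix (pE p) \<and> connected_graph (pE p)"

text \<open>Flux/current relations:
  lambda_s = L_s i_s + R_theta (L_m \<otimes> e1) i_r,  lambda_r = L_r i_r + (L_m \<otimes> e1^T) R_theta^T i_s.\<close>
definition currents ::
  "('n::finite, 'm::finite) params \<Rightarrow> real^'n \<Rightarrow> real^'n \<Rightarrow> (real^2)^'n \<Rightarrow> (real^2)^'n \<Rightarrow> real^'n \<Rightarrow> bool" where
  "currents p th lr ls is ir \<longleftrightarrow>
     (\<forall>i. ls $ i = pLs p $ i *\<^sub>R is $ i + (pLm p $ i * ir $ i) *\<^sub>R (rot (th $ i) *v e1) \<and>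
          lr $ i = pLr p $ i * ir $ i + pLm p $ i * ((transpose (rot (th $ i)) *v is $ i) $ 1))"

text \<open>Electrical torque tau_e = - I_r (L_m \<otimes> e2^T) R_theta^T i_s.\<close>
definition torque :: "('n::finite, 'm::finite) params \<Rightarrow> real^'n \<Rightarrow> (real^2)^'n \<Rightarrow> real^'n \<Rightarrow> real^'n" where
  "torque p th is ir = (\<chi> i. - (ir $ i * pLm p $ i * ((transpose (rot (th $ i)) *v is $ i) $ 2)))"

text \<open>A solution of the system on the time interval [0, \<infinity>) with input (um, ur);
  the angle theta is represented by a lift to real^'n.  The currents is, ir are
  the ones defined from the fluxes.\<close>
definition is_solution ::
  "('n::finite, 'm::finite) params \<Rightarrow>
   (real \<Rightarrow> real^'n) \<Rightarrow> (real \<Rightarrow> real^'n) \<Rightarrow> (real \<Rightarrow> real^'n) \<Rightarrow> (real \<Rightarrow> (real^2)^'n) \<Rightarrow>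
   (real \<Rightarrow> (real^2)^'n) \<Rightarrow> (real \<Rightarrow> (real^2)^'m) \<Rightarrow>
   (real \<Rightarrow> (real^2)^'n) \<Rightarrow> (real \<Rightarrow> real^'n) \<Rightarrow>
   (real \<Rightarrow> real^'n) \<Rightarrow> (real \<Rightarrow> real^'n) \<Rightarrow> bool" where
  "is_solution p w th lr ls v it is ir um ur \<longleftrightarrow>
     (\<forall>t\<in>{0..}.
        currents p (th t) (lr t) (ls t) (is t) (ir t) \<and>
        (w has_vector_derivative
           (\<chi> i. (- pD p $ i * w t $ i - torque p (th t) (is t) (ir t) $ i + um t $ i) / pM p $ i))
           (at t within {0..}) \<and>
        (th has_vector_derivative w t) (at t within {0..}) \<and>
        (lr has_vector_derivative (\<chi> i. - pRr p $ i * ir t $ i + ur t $ i)) (at t within {0..}) \<and>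
        (ls has_vector_derivative (\<chi> i. - pRs p $ i *\<^sub>R is t $ i + v t $ i)) (at t within {0..}) \<and>
        (v has_vector_derivative
           (\<chi> i. (1 / pC p $ i) *\<^sub>R
                  (- pG p $ i *\<^sub>R v t $ i - (\<Sum>k\<in>UNIV. pE p $ i $ k *\<^sub>R it t $ k) - is t $ i)))
           (at t within {0..}) \<and>
        (it has_vector_derivative
           (\<chi> k. (1 / pLt p $ k) *\<^sub>R
                  (- pRt p $ k *\<^sub>R it t $ k + (\<Sum>i\<in>UNIV. pE p $ i $ k *\<^sub>R v t $ i))))
           (at t within {0..}))"

definition in_Omega :: "real \<Rightarrow> real^'n \<Rightarrow> real^'n \<Rightarrow> real^'n \<Rightarrow> bool" where
  "in_Omega w0 irs w ir \<longleftrightarrow> ir = irs \<and> w = (\<chi> i. w0)"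

definition ur_star :: "('n::finite, 'm::finite) params \<Rightarrow> real \<Rightarrow> real^'n \<Rightarrow> real^'n \<Rightarrow> (real^2)^'n \<Rightarrow> (real^2)^'n \<Rightarrow> real^'n" where
  "ur_star p w0 irs th is v =
     (\<chi> i. pRr p $ i * irs $ i +
            pLm p $ i * ((transpose (rot (th $ i)) *v
               ((1 / pLs p $ i) *\<^sub>R
                  (- (pRs p $ i *\<^sub>R is $ i + (w0 * pLs p $ i) *\<^sub>R (jmat *v is $ i)) + v $ i))) $ 1))"

definition um_star :: "('n::finite, 'm::finite) params \<Rightarrow> real \<Rightarrow> real^'n \<Rightarrow> real^'n \<Rightarrow> (real^2)^'n \<Rightarrow> real^'n" where
  "um_star p w0 irs th is =
     (\<chi> i. pD p $ i * w0 - irs $ i * pLm p $ i * ((transpose (rot (th $ i)) *v is $ i) $ 2))"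

end

theory Submission
  imports Defs
begin

lemma rotT1: "(transpose (rot th) *v x) $ 1 = cos th * x $ 1 + sin th * x $ 2"
  by (simp add: rot_def transpose_def matrix_vector_mult_def sum_2 vector_def)
lemma rotT2: "(transpose (rot th) *v x) $ 2 = - sin th * x $ 1 + cos th * x $ 2"
  by (simp add: rot_def transpose_def matrix_vector_mult_def sum_2 vector_def)
lemma rotv1: "(x v* rot th) $ 1 = cos th * x $ 1 + sin th * x $ 2"
  by (simp add: rot_def vector_matrix_mult_def sum_2 vector_def)
lemma rotv2: "(x v* rot th) $ 2 = - sin th * x $ 1 + cos th * x $ 2"
  by (simp add: rot_def vector_matrix_mult_def sum_2 vector_def)
lemma rote1: "(rot th *v e1) $ 1 = cos th" "(rot th *v e1) $ 2 = sin th"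
  by (simp_all add: rot_def e1_def matrix_vector_mult_def sum_2 vector_def)
lemma jmat1: "(jmat *v x) $ 1 = - x $ 2" "(jmat *v x) $ 2 = x $ 1"
  by (simp_all add: jmat_def matrix_vector_mult_def sum_2 vector_def)

lemma vd_nth: "(f has_vector_derivative f') F \<Longrightarrow> ((\<lambda>t. f t $ i) has_real_derivative (f' $ i)) F"
  using bounded_linear.has_vector_derivative[OF bounded_linear_vec_nth, of f f' F i]
  by (simp add: has_real_derivative_iff_has_vector_derivative)

lemma vd_nth2: "(f has_vector_derivative f') F \<Longrightarrow> ((\<lambda>t. f t $ i $ j) has_real_derivative (f' $ i $ j)) F"
proof -
  assume a: "(f has_vector_derivative f') F"
  have bl: "bounded_linear (\<lambda>x. x $ i $ j)"
    using bounded_linear_compose[OF bounded_linear_vec_nth[of j] bounded_linear_vec_nth[of i]] by (simp add: o_def)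
  show ?thesis using bounded_linear.has_vector_derivative[OF bl a]
    by (simp add: has_real_derivative_iff_has_vector_derivative)
qed

lemma nontriv: "(t::real) \<ge> 0 \<Longrightarrow> at t within {0..} \<noteq> bot"
proof
  assume t: "t \<ge> 0" and b: "at t within {0..} = bot"
  have "at t within {t..} \<le> at t within {0..}" by (rule at_le) (use t in auto)
  then have "at_right t = (bot::real filter)" using b by (simp add: at_within_Ici_at_right bot_unique)
  then show False using trivial_limit_at_right_real by auto
qed

lemma uniqR:
  fixes f g :: "real \<Rightarrow> real"
  assumes t: "t \<ge> 0" and eq: "\<And>s. s \<ge> 0 \<Longrightarrow> f s = g s"
    and f: "(f has_real_derivative a) (at t within {0..})"
    and g: "(g has_real_derivative b) (at t within {0..})"
  shows "a = b"
proof -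
  have f': "(f has_vector_derivative a) (at t within {0..})" using f
    by (simp add: has_real_derivative_iff_has_vector_derivative)
  have g': "(f has_vector_derivative b) (at t within {0..})"
    by (rule has_vector_derivative_transform[of t _ _ g])
       (use t eq g in \<open>auto simp: has_real_derivative_iff_has_vector_derivative\<close>)
  show ?thesis by (rule vector_derivative_unique_within[OF nontriv[OF t] f' g'])
qed

lemma partA:
  fixes TH W LR LSa LSb ISa ISb Va Vb :: "real \<Rightarrow> real" and t :: real
  assumes Ls: "Ls > 0" and t: "t \<ge> 0"
    and hTH: "(TH has_real_derivative W t) (at t within {0..})"
    and hLR: "(LR has_real_derivative (- Rr * irs + ur)) (at t within {0..})"
    and hLSa: "(LSa has_real_derivative (- Rs * ISa t + Va t)) (at t within {0..})"
    and hLSb: "(LSb has_real_derivative (- Rs * ISb t + Vb t)) (at t within {0..})"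
    and cur: "\<And>s. s \<ge> 0 \<Longrightarrow> LSa s = Ls * ISa s + Lm * irs * cos (TH s) \<and>
                 LSb s = Ls * ISb s + Lm * irs * sin (TH s) \<and>
                 LR s = Lr * irs + Lm * (cos (TH s) * ISa s + sin (TH s) * ISb s)"
    and W: "W t = w0"
  shows "ur = Rr * irs + Lm * (cos (TH t) * ((- (Rs * ISa t + w0 * Ls * (- ISb t)) + Va t) / Ls)
                    + sin (TH t) * ((- (Rs * ISb t + w0 * Ls * ISa t) + Vb t) / Ls))"
proof -
  have Lsne: "Ls \<noteq> 0" using Ls by simp
  define F where "F s = Lr * irs + Lm * (cos (TH s) * ((LSa s - Lm * irs * cos (TH s)) / Ls)
       + sin (TH s) * ((LSb s - Lm * irs * sin (TH s)) / Ls))" for s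
  have FL: "LR s = F s" if "s \<in> {0..}" for s
    using cur[of s] that Ls by (simp add: F_def field_simps)
  have dF: "(F has_real_derivative
     Lm * ((- sin (TH t) * W t) * ((LSa t - Lm * irs * cos (TH t)) / Ls)
        + cos (TH t) * ((- Rs * ISa t + Va t - Lm * irs * (- sin (TH t) * W t)) / Ls)
        + (cos (TH t) * W t) * ((LSb t - Lm * irs * sin (TH t)) / Ls)
        + sin (TH t) * ((- Rs * ISb t + Vb t - Lm * irs * (cos (TH t) * W t)) / Ls)))
     (at t within {0..})"
    unfolding F_def
    using Ls apply -
    apply (rule derivative_eq_intros hTH hLSa hLSb refl Lsne)+
    apply (simp add: field_simps)
    done
  have "- Rr * irs + ur = Lm * ((- sin (TH t) * W t) * ((LSa t - Lm * irs * cos (TH t)) / Ls)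
        + cos (TH t) * ((- Rs * ISa t + Va t - Lm * irs * (- sin (TH t) * W t)) / Ls)
        + (cos (TH t) * W t) * ((LSb t - Lm * irs * sin (TH t)) / Ls)
        + sin (TH t) * ((- Rs * ISb t + Vb t - Lm * irs * (cos (TH t) * W t)) / Ls))"
    by (rule uniqR[OF t _ hLR dF]) (use FL in auto)
  then show ?thesis using cur[OF t] W Ls by (simp add: field_simps)
qed

lemma nonincr:
  fixes V Vd :: "real \<Rightarrow> real"
  assumes d: "\<And>s. s \<ge> 0 \<Longrightarrow> (V has_real_derivative Vd s) (at s within {0..})"
    and n: "\<And>s. s \<ge> 0 \<Longrightarrow> Vd s \<le> 0" and s: "s \<ge> 0"
  shows "V s \<le> V 0"
proof (cases "s = 0")
  case True then show ?thesis by simp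
next
  case False
  with s have s0: "0 < s" by simp
  have c: "continuous_on {0..} V" by (rule DERIV_continuous_on[of _ _ Vd]) (use d in auto)
  have "continuous_on {0..s} V" by (rule continuous_on_subset[OF c]) auto
  moreover have "V differentiable (at x)" if "0 < x" for x
  proof -
    have "at x within {0..} = at x" by (rule at_within_open_subset[of _ "{0<..}"]) (use that in auto)
    then show ?thesis using d[of x] that by (auto simp: real_differentiable_def)
  qed
  ultimately obtain l z where z: "0 < z" "z < s" "DERIV V z :> l" "V s - V 0 = (s - 0) * l"
    using MVT[OF s0, of V] by auto
  have "at z within {0..} = at z" by (rule at_within_open_subset[of _ "{0<..}"]) (use z in auto)
  then have "DERIV V z :> Vd z" using d[of z] z by auto
  then have "l = Vd z" using z(3) DERIV_unique by blast
  then have "l \<le> 0" using n[of z] z by auto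
  then show ?thesis using z(4) s0 mult_nonneg_nonpos[of s l] by simp
qed

lemma partB:
  fixes TH W LR LSa LSb ISa ISb Va Vb IR :: "real \<Rightarrow> real"
  assumes Ls: "Ls > 0" and Dl: "Ls * Lr - Lm^2 > 0" and M: "M > 0" and Dp: "D > 0" and Rr: "Rr > 0"
    and hW: "\<And>s. s \<ge> 0 \<Longrightarrow> (W has_real_derivative
        (- D * W s - (- (IR s * Lm * (- sin (TH s) * ISa s + cos (TH s) * ISb s)))
         + (D * w0 - irs * Lm * (- sin (TH s) * ISa s + cos (TH s) * ISb s))) / M) (at s within {0..})"
    and hTH: "\<And>s. s \<ge> 0 \<Longrightarrow> (TH has_real_derivative W s) (at s within {0..})"
    and hLR: "\<And>s. s \<ge> 0 \<Longrightarrow> (LR has_real_derivative (- Rr * IR s +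
         (Rr * irs + Lm * (cos (TH s) * ((- (Rs * ISa s + w0 * Ls * (- ISb s)) + Va s) / Ls)
                    + sin (TH s) * ((- (Rs * ISb s + w0 * Ls * ISa s) + Vb s) / Ls))))) (at s within {0..})"
    and hLSa: "\<And>s. s \<ge> 0 \<Longrightarrow> (LSa has_real_derivative (- Rs * ISa s + Va s)) (at s within {0..})"
    and hLSb: "\<And>s. s \<ge> 0 \<Longrightarrow> (LSb has_real_derivative (- Rs * ISb s + Vb s)) (at s within {0..})"
    and cur: "\<And>s. s \<ge> 0 \<Longrightarrow> LSa s = Ls * ISa s + Lm * IR s * cos (TH s) \<and>
                 LSb s = Ls * ISb s + Lm * IR s * sin (TH s) \<and>
                 LR s = Lr * IR s + Lm * (cos (TH s) * ISa s + sin (TH s) * ISb s)"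
    and W0: "W 0 = w0" and IR0: "IR 0 = irs" and t: "t \<ge> 0"
  shows "IR t = irs \<and> W t = w0"
proof -
  define Dl where "Dl = Ls * Lr - Lm^2"
  have Dlp: "Dl > 0" using Dl by (simp add: Dl_def)
  have Dlne: "Dl \<noteq> 0" using Dlp by simp
  have Lsne: "Ls \<noteq> 0" using Ls by simp
  define IRt where "IRt s = (Ls * LR s - Lm * (cos (TH s) * LSa s + sin (TH s) * LSb s)) / Dl" for s
  have IReq: "IR s = IRt s" if "s \<ge> 0" for s
  proof -
    have "Ls * LR s - Lm * (cos (TH s) * LSa s + sin (TH s) * LSb s) = Dl * IR s"
      using cur[OF that] unfolding Dl_def
      by (simp add: algebra_simps power2_eq_square)
         (metis (no_types, lifting) mult.commute mult.left_commute distrib_left mult.right_neutral sin_cos_squared_add3)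
    then show ?thesis using Dlne unfolding IRt_def by simp
  qed
  define LRd where "LRd s = (- Rr * IR s +
         (Rr * irs + Lm * (cos (TH s) * ((- (Rs * ISa s + w0 * Ls * (- ISb s)) + Va s) / Ls)
                    + sin (TH s) * ((- (Rs * ISb s + w0 * Ls * ISa s) + Vb s) / Ls))))" for s
  define Wd where "Wd s = (- D * W s - (- (IR s * Lm * (- sin (TH s) * ISa s + cos (TH s) * ISb s)))
         + (D * w0 - irs * Lm * (- sin (TH s) * ISa s + cos (TH s) * ISb s))) / M" for s
  define IRd where "IRd s = (Ls * LRd s - Lm * ((- sin (TH s) * W s) * LSa s + cos (TH s) * (- Rs * ISa s + Va s)
       + (cos (TH s) * W s) * LSb s + sin (TH s) * (- Rs * ISb s + Vb s))) / Dl" for s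
  define V where "V s = (Dl / Ls) * (IRt s - irs)^2 + M * (W s - w0)^2" for s
  define Vd where "Vd s = 2 * (Dl / Ls) * (IRt s - irs) * IRd s + 2 * M * (W s - w0) * Wd s" for s
  have dIR: "(IRt has_real_derivative IRd s) (at s within {0..})" if "s \<ge> 0" for s
    unfolding IRt_def IRd_def
    apply (rule derivative_eq_intros hTH[OF that] hLSa[OF that] hLSb[OF that] refl Dlne
                hLR[OF that, folded LRd_def])+
    using Dlne apply (simp add: field_simps)
    done
  have dV: "(V has_real_derivative Vd s) (at s within {0..})" if "s \<ge> 0" for s
    unfolding V_def Vd_def
    apply (rule derivative_eq_intros dIR[OF that] hW[OF that, folded Wd_def] refl Lsne)+
    apply (simp add: field_simps)
    done
  have key: "Vd s = - 2 * (Rr * (IR s - irs)^2 + D * (W s - w0)^2)" if "s \<ge> 0" for s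
  proof -
    have "Dl * IRd s = Ls * (- Rr * (IR s - irs) - Lm * (- sin (TH s) * ISa s + cos (TH s) * ISb s) * (W s - w0))"
      using cur[OF that] Dlne Lsne unfolding IRd_def LRd_def
      by (simp add: field_simps)
    moreover have "M * Wd s = - D * (W s - w0) + Lm * (- sin (TH s) * ISa s + cos (TH s) * ISb s) * (IR s - irs)"
      using M unfolding Wd_def by (simp add: field_simps)
    ultimately have A: "(Dl / Ls) * IRd s = - Rr * (IR s - irs) - Lm * (- sin (TH s) * ISa s + cos (TH s) * ISb s) * (W s - w0)"
      and B: "M * Wd s = - D * (W s - w0) + Lm * (- sin (TH s) * ISa s + cos (TH s) * ISb s) * (IR s - irs)"
      using Lsne by (auto simp: field_simps)
    have "Vd s = 2 * (IR s - irs) * ((Dl / Ls) * IRd s) + 2 * (W s - w0) * (M * Wd s)"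
      unfolding Vd_def IReq[OF that, symmetric] by (simp add: algebra_simps add_divide_distrib[symmetric])
    also have "\<dots> = - 2 * (Rr * (IR s - irs)^2 + D * (W s - w0)^2)"
      unfolding A B by (simp add: algebra_simps power2_eq_square)
    finally show ?thesis .
  qed
  have "V t \<le> V 0"
  proof (rule nonincr[OF dV _ t])
    fix s :: real assume s: "0 \<le> s"
    have "Rr * (IR s - irs)^2 \<ge> 0" "D * (W s - w0)^2 \<ge> 0" using Rr Dp by auto
    then have "Rr * (IR s - irs)^2 + D * (W s - w0)^2 \<ge> 0" by linarith
    then show "Vd s \<le> 0" unfolding key[OF s] by simp
  qed
  moreover have "V 0 = 0" unfolding V_def using IReq[of 0] IR0 W0 by simp
  ultimately have "V t \<le> 0" by simp
  moreover have "(Dl / Ls) * (IRt t - irs)^2 \<ge> 0" "M * (W t - w0)^2 \<ge> 0" using Dlp Ls M by auto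
  ultimately have "(Dl / Ls) * (IRt t - irs)^2 = 0" "M * (W t - w0)^2 = 0" unfolding V_def by linarith+
  then show ?thesis using Dlp Ls M IReq[OF t] by auto
qed

lemma main1:
  fixes p :: "('n::finite, 'm::finite) params" and w0 :: real and irs :: "real^'n"
  assumes vp: "\<And>i. pM p $ i > 0 \<and> pD p $ i > 0 \<and> pRr p $ i > 0 \<and> pLr p $ i > 0 \<and> pLm p $ i > 0 \<and>
          pRs p $ i > 0 \<and> pLs p $ i > 0 \<and> pC p $ i > 0 \<and> pG p $ i > 0 \<and>
          pLs p $ i * pLr p $ i - (pLm p $ i)\<^sup>2 > 0"
    and H: "is_solution p w th lr ls v it is ir um ur \<and> (\<forall>t\<ge>0. in_Omega w0 irs (w t) (ir t))"
  shows "\<forall>t\<ge>0. um t = um_star p w0 irs (th t) (is t) \<and> ur t = ur_star p w0 irs (th t) (is t) (v t)"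
proof -
  have sol: "\<And>t. t \<ge> 0 \<Longrightarrow> currents p (th t) (lr t) (ls t) (is t) (ir t) \<and>
      (w has_vector_derivative
         (\<chi> i. (- pD p $ i * w t $ i - torque p (th t) (is t) (ir t) $ i + um t $ i) / pM p $ i))
         (at t within {0..}) \<and>
      (th has_vector_derivative w t) (at t within {0..}) \<and>
      (lr has_vector_derivative (\<chi> i. - pRr p $ i * ir t $ i + ur t $ i)) (at t within {0..}) \<and>
      (ls has_vector_derivative (\<chi> i. - pRs p $ i *\<^sub>R is t $ i + v t $ i)) (at t within {0..})"
    using H unfolding is_solution_def by auto
  have Om: "\<And>t. t \<ge> 0 \<Longrightarrow> ir t = irs \<and> w t = (\<chi> i. w0)" using H unfolding in_Omega_def by auto
  show "\<forall>t\<ge>0. um t = um_star p w0 irs (th t) (is t) \<and> ur t = ur_star p w0 irs (th t) (is t) (v t)"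
  proof (intro allI impI conjI)
    fix t :: real assume t: "t \<ge> 0"
    show "um t = um_star p w0 irs (th t) (is t)"
    proof (subst vec_eq_iff, intro allI)
      fix i
      have d1: "((\<lambda>s. w s $ i) has_real_derivative
          (- pD p $ i * w t $ i - torque p (th t) (is t) (ir t) $ i + um t $ i) / pM p $ i) (at t within {0..})"
        using vd_nth[OF conjunct1[OF conjunct2[OF sol[OF t]]], of i] by simp
      have d2: "((\<lambda>s. w0) has_real_derivative 0) (at t within {0..})" by (rule derivative_intros)
      have "(- pD p $ i * w t $ i - torque p (th t) (is t) (ir t) $ i + um t $ i) / pM p $ i = 0"
        by (rule uniqR[OF t _ d1 d2]) (use Om in auto)
      then show "um t $ i = um_star p w0 irs (th t) (is t) $ i"
        using vp[of i] Om[OF t] by (auto simp: torque_def um_star_def rotT2 rotv2 field_simps)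
    qed
    show "ur t = ur_star p w0 irs (th t) (is t) (v t)"
    proof (subst vec_eq_iff, intro allI)
      fix i
      have "ur t $ i = pRr p $ i * irs $ i + pLm p $ i * (cos (th t $ i) * ((- (pRs p $ i * is t $ i $ 1 + w0 * pLs p $ i * (- is t $ i $ 2)) + v t $ i $ 1) / pLs p $ i)
                  + sin (th t $ i) * ((- (pRs p $ i * is t $ i $ 2 + w0 * pLs p $ i * is t $ i $ 1) + v t $ i $ 2) / pLs p $ i))"
      proof (rule partA[where TH="\<lambda>s. th s $ i" and W="\<lambda>s. w s $ i" and LR="\<lambda>s. lr s $ i"
             and LSa="\<lambda>s. ls s $ i $ 1" and LSb="\<lambda>s. ls s $ i $ 2" and ISa="\<lambda>s. is s $ i $ 1"
             and ISb="\<lambda>s. is s $ i $ 2" and Va="\<lambda>s. v s $ i $ 1" and Vb="\<lambda>s. v s $ i $ 2"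
             and Lr="pLr p $ i", OF _ t])
        show "pLs p $ i > 0" using vp by auto
        show "((\<lambda>s. th s $ i) has_real_derivative w t $ i) (at t within {0..})"
          using vd_nth sol[OF t] by blast
        show "((\<lambda>s. lr s $ i) has_real_derivative - pRr p $ i * irs $ i + ur t $ i) (at t within {0..})"
          using vd_nth[OF conjunct1[OF conjunct2[OF conjunct2[OF conjunct2[OF sol[OF t]]]]], of i] Om[OF t] by simp
        show "((\<lambda>s. ls s $ i $ 1) has_real_derivative - pRs p $ i * is t $ i $ 1 + v t $ i $ 1) (at t within {0..})"
          using vd_nth2[OF conjunct2[OF conjunct2[OF conjunct2[OF conjunct2[OF sol[OF t]]]]], of i 1] by simp
        show "((\<lambda>s. ls s $ i $ 2) has_real_derivative - pRs p $ i * is t $ i $ 2 + v t $ i $ 2) (at t within {0..})"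
          using vd_nth2[OF conjunct2[OF conjunct2[OF conjunct2[OF conjunct2[OF sol[OF t]]]]], of i 2] by simp
        show "w t $ i = w0" using Om[OF t] by simp
        fix s :: real assume s: "s \<ge> 0"
        show "ls s $ i $ 1 = pLs p $ i * is s $ i $ 1 + pLm p $ i * irs $ i * cos (th s $ i) \<and>
              ls s $ i $ 2 = pLs p $ i * is s $ i $ 2 + pLm p $ i * irs $ i * sin (th s $ i) \<and>
              lr s $ i = pLr p $ i * irs $ i + pLm p $ i * (cos (th s $ i) * is s $ i $ 1 + sin (th s $ i) * is s $ i $ 2)"
          using sol[OF s] Om[OF s] unfolding currents_def by (simp add: rote1 rotT1 rotv1)
      qed
      then show "ur t $ i = ur_star p w0 irs (th t) (is t) (v t) $ i"
        by (simp add: ur_star_def rotT1 rotv1 jmat1 field_simps)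
    qed
  qed
qed

lemma main2:
  fixes p :: "('n::finite, 'm::finite) params" and w0 :: real and irs :: "real^'n"
  assumes vp: "\<And>i. pM p $ i > 0 \<and> pD p $ i > 0 \<and> pRr p $ i > 0 \<and> pLr p $ i > 0 \<and> pLm p $ i > 0 \<and>
          pRs p $ i > 0 \<and> pLs p $ i > 0 \<and> pC p $ i > 0 \<and> pG p $ i > 0 \<and>
          pLs p $ i * pLr p $ i - (pLm p $ i)\<^sup>2 > 0"
    and H: "is_solution p w th lr ls v it is ir um ur \<and>
            (\<forall>t\<ge>0. um t = um_star p w0 irs (th t) (is t) \<and>
                     ur t = ur_star p w0 irs (th t) (is t) (v t)) \<and>
            in_Omega w0 irs (w 0) (ir 0)"
  shows "\<forall>t\<ge>0. in_Omega w0 irs (w t) (ir t)"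
proof -
  have sol: "\<And>t. t \<ge> 0 \<Longrightarrow> currents p (th t) (lr t) (ls t) (is t) (ir t) \<and>
      (w has_vector_derivative
         (\<chi> i. (- pD p $ i * w t $ i - torque p (th t) (is t) (ir t) $ i + um t $ i) / pM p $ i))
         (at t within {0..}) \<and>
      (th has_vector_derivative w t) (at t within {0..}) \<and>
      (lr has_vector_derivative (\<chi> i. - pRr p $ i * ir t $ i + ur t $ i)) (at t within {0..}) \<and>
      (ls has_vector_derivative (\<chi> i. - pRs p $ i *\<^sub>R is t $ i + v t $ i)) (at t within {0..})"
    using H unfolding is_solution_def by auto
  have U: "\<And>t. t \<ge> 0 \<Longrightarrow> um t = um_star p w0 irs (th t) (is t) \<and>
                   ur t = ur_star p w0 irs (th t) (is t) (v t)" using H by auto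
  have I0: "ir 0 = irs" "w 0 = (\<chi> i. w0)" using H unfolding in_Omega_def by auto
  show "\<forall>t\<ge>0. in_Omega w0 irs (w t) (ir t)"
  proof (intro allI impI)
    fix t :: real assume t: "t \<ge> 0"
    have "ir t $ i = irs $ i \<and> w t $ i = w0" for i
    proof (rule partB[where TH="\<lambda>s. th s $ i" and W="\<lambda>s. w s $ i" and LR="\<lambda>s. lr s $ i"
             and LSa="\<lambda>s. ls s $ i $ 1" and LSb="\<lambda>s. ls s $ i $ 2" and ISa="\<lambda>s. is s $ i $ 1"
             and ISb="\<lambda>s. is s $ i $ 2" and Va="\<lambda>s. v s $ i $ 1" and Vb="\<lambda>s. v s $ i $ 2"
             and IR="\<lambda>s. ir s $ i"
             and Lr="pLr p $ i" and Lm="pLm p $ i" and Ls="pLs p $ i" and M="pM p $ i"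
             and D="pD p $ i" and Rr="pRr p $ i" and Rs="pRs p $ i", OF _ _ _ _ _ _ _ _ _ _ _ _ _ t])
      show "pLs p $ i > 0" "pLs p $ i * pLr p $ i - (pLm p $ i)\<^sup>2 > 0" "pM p $ i > 0" "pD p $ i > 0" "pRr p $ i > 0"
        using vp[of i] by auto
      show "w 0 $ i = w0" "ir 0 $ i = irs $ i" using I0 by auto
      fix s :: real assume s: "s \<ge> 0"
      show "((\<lambda>s. th s $ i) has_real_derivative w s $ i) (at s within {0..})"
        using vd_nth sol[OF s] by blast
      show "((\<lambda>s. ls s $ i $ 1) has_real_derivative - pRs p $ i * is s $ i $ 1 + v s $ i $ 1) (at s within {0..})"
        using vd_nth2[OF conjunct2[OF conjunct2[OF conjunct2[OF conjunct2[OF sol[OF s]]]]], of i 1] by simp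
      show "((\<lambda>s. ls s $ i $ 2) has_real_derivative - pRs p $ i * is s $ i $ 2 + v s $ i $ 2) (at s within {0..})"
        using vd_nth2[OF conjunct2[OF conjunct2[OF conjunct2[OF conjunct2[OF sol[OF s]]]]], of i 2] by simp
      show "ls s $ i $ 1 = pLs p $ i * is s $ i $ 1 + pLm p $ i * ir s $ i * cos (th s $ i) \<and>
              ls s $ i $ 2 = pLs p $ i * is s $ i $ 2 + pLm p $ i * ir s $ i * sin (th s $ i) \<and>
              lr s $ i = pLr p $ i * ir s $ i + pLm p $ i * (cos (th s $ i) * is s $ i $ 1 + sin (th s $ i) * is s $ i $ 2)"
        using sol[OF s] unfolding currents_def by (simp add: rote1 rotT1 rotv1)
      show "((\<lambda>s. w s $ i) has_real_derivative
          (- pD p $ i * w s $ i - (- (ir s $ i * pLm p $ i * (- sin (th s $ i) * is s $ i $ 1 + cos (th s $ i) * is s $ i $ 2)))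
       + (pD p $ i * w0 - irs $ i * pLm p $ i * (- sin (th s $ i) * is s $ i $ 1 + cos (th s $ i) * is s $ i $ 2))) / pM p $ i) (at s within {0..})"
        by (rule DERIV_cong[OF vd_nth[OF conjunct1[OF conjunct2[OF sol[OF s]]], of i]])
           (use U[OF s] in \<open>simp add: torque_def um_star_def rotT2 rotv2\<close>)
      show "((\<lambda>s. lr s $ i) has_real_derivative - pRr p $ i * ir s $ i +
       (pRr p $ i * irs $ i + pLm p $ i * (cos (th s $ i) * ((- (pRs p $ i * is s $ i $ 1 + w0 * pLs p $ i * (- is s $ i $ 2)) + v s $ i $ 1) / pLs p $ i)
                  + sin (th s $ i) * ((- (pRs p $ i * is s $ i $ 2 + w0 * pLs p $ i * is s $ i $ 1) + v s $ i $ 2) / pLs p $ i)))) (at s within {0..})"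
        by (rule DERIV_cong[OF vd_nth[of lr _ _ i]]) (use sol[OF s] U[OF s] in \<open>auto simp: ur_star_def rotT1 rotv1 jmat1 field_simps\<close>)
    qed
    then show "in_Omega w0 irs (w t) (ir t)" unfolding in_Omega_def by (simp add: vec_eq_iff)
  qed
qed

theorem lemma1:
  fixes p :: "('n::finite, 'm::finite) params" and w0 :: real and irs :: "real^'n"
  assumes "valid_params p" and "w0 > 0" and "\<forall>i. irs $ i > 0"
  shows "(\<forall>w th lr ls v it is ir um ur.
            is_solution p w th lr ls v it is ir um ur \<and>
            (\<forall>t\<ge>0. in_Omega w0 irs (w t) (ir t))
            \<longrightarrow> (\<forall>t\<ge>0. um t = um_star p w0 irs (th t) (is t) \<and>
                         ur t = ur_star p w0 irs (th t) (is t) (v t)))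
       \<and> (\<forall>w th lr ls v it is ir um ur.
            is_solution p w th lr ls v it is ir um ur \<and>
            (\<forall>t\<ge>0. um t = um_star p w0 irs (th t) (is t) \<and>
                     ur t = ur_star p w0 irs (th t) (is t) (v t)) \<and>
            in_Omega w0 irs (w 0) (ir 0)
            \<longrightarrow> (\<forall>t\<ge>0. in_Omega w0 irs (w t) (ir t)))"
proof (rule conjI; (rule allI)+, rule impI)
  have vp: "\<And>i. pM p $ i > 0 \<and> pD p $ i > 0 \<and> pRr p $ i > 0 \<and> pLr p $ i > 0 \<and> pLm p $ i > 0 \<and>
          pRs p $ i > 0 \<and> pLs p $ i > 0 \<and> pC p $ i > 0 \<and> pG p $ i > 0 \<and>
          pLs p $ i * pLr p $ i - (pLm p $ i)\<^sup>2 > 0" using assms(1) unfolding valid_params_def by blast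
  show "\<And>w th lr ls v it is ir um ur. is_solution p w th lr ls v it is ir um ur \<and> (\<forall>t\<ge>0. in_Omega w0 irs (w t) (ir t)) \<Longrightarrow> \<forall>t\<ge>0. um t = um_star p w0 irs (th t) (is t) \<and> ur t = ur_star p w0 irs (th t) (is t) (v t)"
    by (rule main1[OF vp])
  show "\<And>w th lr ls v it is ir um ur. is_solution p w th lr ls v it is ir um ur \<and> (\<forall>t\<ge>0. um t = um_star p w0 irs (th t) (is t) \<and> ur t = ur_star p w0 irs (th t) (is t) (v t)) \<and> in_Omega w0 irs (w 0) (ir 0) \<Longrightarrow> \<forall>t\<ge>0. in_Omega w0 irs (w t) (ir t)"
    by (rule main2[OF vp])
qed

end
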